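(* Let $G$ be a profinite group, and let $G=G_0\ge\cdots\ge G_\alpha\ge\cdots\ge G_\mu=\{e\}$ and $G=H_0\ge\cdots\ge H_\lambda\ge\cdots\ge H_\Delta=\{e\}$ be two composition series for $G$ (over ordinals $\mu$ and $\Delta$). Let $S$ be a finite simple group, and put $\mathcal S_1=\{\alpha<\mu : G_\alpha/G_{\alpha+1}\cong S\}$ and $\mathcal S_2=\{\lambda<\Delta : H_\lambda/H_{\lambda+1}\cong S\}$. Then $|\mathcal S_1|=|\mathcal S_2|$ (equality of cardinals).
   Context: All subgroups of profinite groups are closed and all quotients are topological quotients. An accessible series from $G$ to $\{e\}$ over an ordinal $\mu$ is a family of closed subgroups $G=G_0\ge\cdots\ge G_\lambda\ge\cdots\ge G_\mu=\{e\}$ with $G_{\alpha+1}\trianglelefteq G_\alpha$ for all $\alpha<\mu$ and $G_\alpha=\bigcap_{\beta<\alpha}G_\beta$ for all limit $\alpha\le\mu$. A composition series for $G$ is such a series with $G_\lambda/G_{\lambda+1}$ finite simple nontrivial for all $\lambda<\mu$. *)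

theory Defs
  imports "HOL-Analysis.Analysis" "HOL-Algebra.Algebra" "HOL-Library.Equipollence"
begin

definition profinite_group :: "('a, 'b) monoid_scheme \<Rightarrow> 'a topology \<Rightarrow> bool" where
  "profinite_group G T \<longleftrightarrow>
     group G \<and> topspace T = carrier G \<and>
     continuous_map (prod_topology T T) T (\<lambda>(x, y). x \<otimes>\<^bsub>G\<^esub> y) \<and>
     continuous_map T T (\<lambda>x. inv\<^bsub>G\<^esub> x) \<and>
     compact_space T \<and> Hausdorff_space T \<and>
     (\<forall>x y. connected_component_of T x y \<longrightarrow> x = y)"

text \<open>Ordinals are modelled as elements of a well-ordered type; the series is indexed
  by the initial segment {..mu}. The successor of an index is the least strictly larger one.\<close>
definition ord_succ :: "'i::wellorder \<Rightarrow> 'i" where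
  "ord_succ a = (LEAST b. a < b)"

definition is_limit :: "'i::wellorder \<Rightarrow> bool" where
  "is_limit a \<longleftrightarrow> (\<exists>b. b < a) \<and> (\<forall>b. b < a \<longrightarrow> (\<exists>c. b < c \<and> c < a))"

definition composition_series ::
  "('a, 'b) monoid_scheme \<Rightarrow> 'a topology \<Rightarrow> 'i::wellorder \<Rightarrow> ('i \<Rightarrow> 'a set) \<Rightarrow> bool" where
  "composition_series G T mu Gs \<longleftrightarrow>
     Gs (LEAST a. True) = carrier G \<and> Gs mu = {\<one>\<^bsub>G\<^esub>} \<and>
     (\<forall>a\<le>mu. subgroup (Gs a) G \<and> closedin T (Gs a)) \<and>
     (\<forall>a b. a \<le> b \<and> b \<le> mu \<longrightarrow> Gs b \<subseteq> Gs a) \<and>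
     (\<forall>a<mu. Gs (ord_succ a) \<lhd> (G\<lparr>carrier := Gs a\<rparr>)) \<and>
     (\<forall>a\<le>mu. is_limit a \<longrightarrow> Gs a = (\<Inter>b\<in>{b. b < a}. Gs b)) \<and>
     (\<forall>a<mu. finite (carrier ((G\<lparr>carrier := Gs a\<rparr>) Mod Gs (ord_succ a))) \<and>
             simple_group ((G\<lparr>carrier := Gs a\<rparr>) Mod Gs (ord_succ a)))"

end

theory Submission
  imports Defs
begin

lemma succ_gt: "(a::'i::wellorder) < c \<Longrightarrow> a < ord_succ a"
  unfolding ord_succ_def by (rule LeastI)

lemma succ_le: "(a::'i::wellorder) < c \<Longrightarrow> ord_succ a \<le> c"
  unfolding ord_succ_def by (rule Least_le)

lemma lt_succ_iff: "(a::'i::wellorder) < c \<Longrightarrow> b < ord_succ a \<longleftrightarrow> b \<le> a"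
  by (metis leD le_less_trans linorder_le_less_linear succ_gt succ_le)

lemma nonlimit_succ:
  assumes "\<not> is_limit (f::'i::wellorder)" "b0 < f"
  shows "\<exists>p. p < f \<and> f = ord_succ p"
proof -
  from assms obtain b where b: "b < f" "\<forall>c. b < c \<longrightarrow> \<not> c < f"
    unfolding is_limit_def by blast
  have "ord_succ b \<le> f" using succ_le[OF b(1)] .
  moreover have "b < ord_succ b" using succ_gt[OF b(1)] .
  hence "\<not> ord_succ b < f" using b(2) by blast
  ultimately show ?thesis using b(1) by auto
qed

lemma least_le: "(LEAST a::'i::wellorder. True) \<le> x"
  by (rule Least_le) simp

lemma r_coset_upd[simp]: "H #>\<^bsub>M\<lparr>carrier:=A\<rparr>\<^esub> x = H #>\<^bsub>M\<^esub> x"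
  by (simp add: r_coset_def)

lemma r_coset_upd2[simp]: "H #>\<^bsub>M\<lparr>carrier:=A, carrier:=B\<rparr>\<^esub> x = H #>\<^bsub>M\<^esub> x"
  by (simp add: r_coset_def)

lemma (in group) rcos_in_sub:
  assumes "subgroup H G" "x \<in> carrier G" "H #> x = H"
  shows "x \<in> H"
proof -
  have "x \<in> H #> x" using assms by (metis subgroup.one_closed l_one r_coset_def  UN_iff singletonI)
  thus ?thesis using assms(3) by simp
qed

lemma (in group) iso_triv_transfer:
  assumes iso: "(G\<lparr>carrier:=A1\<rparr> Mod N1) \<cong> (G\<lparr>carrier:=A2\<rparr> Mod N2)"
    and A1: "subgroup A1 G" and N1: "subgroup N1 G" and N1A1: "N1 \<subseteq> A1"
    and N2: "subgroup N2 G" and eq: "A2 = N2"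
  shows "A1 = N1"
proof -
  obtain h where h: "bij_betw h (carrier (G\<lparr>carrier:=A1\<rparr> Mod N1)) (carrier (G\<lparr>carrier:=A2\<rparr> Mod N2))"
    using iso unfolding is_iso_def iso_def by auto
  have c2: "carrier (G\<lparr>carrier:=A2\<rparr> Mod N2) = {N2}"
  proof -
    have "\<And>x. x \<in> N2 \<Longrightarrow> N2 #> x = N2"
      using N2 subgroup.rcos_const by (metis is_group)
    moreover have "N2 #> \<one> = N2" using N2 by (simp add: coset_mult_one subgroup.subset)
    moreover have "carrier (G\<lparr>carrier:=A2\<rparr> Mod N2) = (\<lambda>x. N2 #> x) ` N2"
      using eq unfolding FactGroup_def RCOSETS_def r_coset_def by auto
    moreover have "\<one> \<in> N2" using N2 subgroup.one_closed by blast
    ultimately show ?thesis by auto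
  qed
  have c1: "\<And>x. x \<in> A1 \<Longrightarrow> N1 #> x \<in> carrier (G\<lparr>carrier:=A1\<rparr> Mod N1)"
    unfolding FactGroup_def RCOSETS_def r_coset_def by auto
  have "A1 \<subseteq> N1"
  proof
    fix x assume x: "x \<in> A1"
    have "N1 #> \<one> = N1" using N1 by (simp add: coset_mult_one subgroup.subset)
    have o: "\<one> \<in> A1" using A1 subgroup.one_closed by blast
    have "h (N1 #> x) = h (N1 #> \<one>)"
      using c1[OF x] c1[OF o] h c2 unfolding bij_betw_def by auto
    hence "N1 #> x = N1 #> \<one>"
      using c1[OF x] c1[OF o] h unfolding bij_betw_def inj_on_def by blast
    hence "N1 #> x = N1" using \<open>N1 #> \<one> = N1\<close> by simp
    thus "x \<in> N1" using rcos_in_sub[OF N1] x A1 subgroup.subset by blast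
  qed
  thus ?thesis using N1A1 by blast
qed

lemma (in group) simple_between:
  assumes A: "subgroup A G" and HA: "H \<lhd> G\<lparr>carrier := A\<rparr>"
    and simp: "simple_group (G\<lparr>carrier := A\<rparr> Mod H)"
    and N: "N \<lhd> G\<lparr>carrier := A\<rparr>" and HN: "H \<subseteq> N"
  shows "N = A \<or> N = H"
proof -
  interpret G': group "G\<lparr>carrier := A\<rparr>" using subgroup_imp_group[OF A] .
  have nf: "rcosets\<^bsub>G\<lparr>carrier := A, carrier := N\<rparr>\<^esub> H \<lhd> (G\<lparr>carrier := A\<rparr> Mod H)"
    using G'.normality_factorization[OF HA HN N] .
  hence "rcosets\<^bsub>G\<lparr>carrier := A, carrier := N\<rparr>\<^esub> H = carrier (G\<lparr>carrier := A\<rparr> Mod H)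
      \<or> rcosets\<^bsub>G\<lparr>carrier := A, carrier := N\<rparr>\<^esub> H = {\<one>\<^bsub>G\<lparr>carrier := A\<rparr> Mod H\<^esub>}"
    using simple_group.no_real_normal_subgroup[OF simp] by blast
  have Ns: "subgroup N (G\<lparr>carrier := A\<rparr>)" using N normal_imp_subgroup by blast
  have NA: "N \<subseteq> A" using subgroup.subset[OF Ns] by simp
  have NG: "subgroup N G" using incl_subgroup[OF A Ns] .
  have Hs': "subgroup H (G\<lparr>carrier := A\<rparr>)" using HA normal_imp_subgroup by blast
  have HG: "subgroup H G" using incl_subgroup[OF A Hs'] .
  from \<open>_ \<or> _\<close> show ?thesis
  proof
    assume eq: "rcosets\<^bsub>G\<lparr>carrier := A, carrier := N\<rparr>\<^esub> H = carrier (G\<lparr>carrier := A\<rparr> Mod H)"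
    have "A \<subseteq> N"
    proof
      fix g assume g: "g \<in> A"
      have "H #> g \<in> carrier (G\<lparr>carrier := A\<rparr> Mod H)"
        using g unfolding FactGroup_def RCOSETS_def r_coset_def by auto
      then obtain x where x: "x \<in> N" "H #> g = H #> x"
        using eq unfolding RCOSETS_def by auto
      have "g \<in> H #> g"
        using g A HG subgroup.subset[OF A] rcos_self by blast
      also have "\<dots> = H #> x" by (rule x(2))
      also have "\<dots> \<subseteq> N" using HN x(1) NG unfolding r_coset_def
        by (auto intro: subgroup.m_closed)
      finally show "g \<in> N" .
    qed
    thus ?thesis using NA by blast
  next
    assume eq: "rcosets\<^bsub>G\<lparr>carrier := A, carrier := N\<rparr>\<^esub> H = {\<one>\<^bsub>G\<lparr>carrier := A\<rparr> Mod H\<^esub>}"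
    have "N \<subseteq> H"
    proof
      fix x assume x: "x \<in> N"
      have "H #> x \<in> rcosets\<^bsub>G\<lparr>carrier := A, carrier := N\<rparr>\<^esub> H"
        using x unfolding RCOSETS_def r_coset_def by auto
      hence "H #> x = H" using eq by (simp add: FactGroup_def)
      thus "x \<in> H" using rcos_in_sub[OF HG] x NG subgroup.subset by blast
    qed
    thus ?thesis using HN by blast
  qed
qed


lemma (in group) setmult_sub:
  assumes A: "subgroup A G" and N: "N \<lhd> G\<lparr>carrier:=A\<rparr>" and B: "subgroup B G"
  shows "subgroup (N <#> (A \<inter> B)) G"
proof -
  have "subgroup (A \<inter> B) (G\<lparr>carrier:=A\<rparr>)"
    using subgroup_incl[OF subgroups_Inter_pair[OF A B] A] by blast
  hence "subgroup (N <#> (A \<inter> B)) (G\<lparr>carrier:=A\<rparr>)"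
    using mult_norm_sub_in_sub[OF N _ A] by blast
  thus ?thesis using incl_subgroup[OF A] by blast
qed

locale two_series = group G for G :: "('a, 'b) monoid_scheme" (structure) +
  fixes T :: "'a topology" and m :: "'i::wellorder" and GS :: "'i \<Rightarrow> 'a set"
    and d :: "'j::wellorder" and HS :: "'j \<Rightarrow> 'a set"
  assumes cpt: "compact_space T" and top: "topspace T = carrier G"
    and mcont: "continuous_map (prod_topology T T) T (\<lambda>(x, y). x \<otimes> y)"
    and icont: "continuous_map T T (\<lambda>x. inv x)"
    and GSc: "composition_series G T m GS" and HSc: "composition_series G T d HS"
begin

lemma GS_facts:
  "GS (LEAST a. True) = carrier G" "GS m = {\<one>}"
  "\<forall>a\<le>m. subgroup (GS a) G \<and> closedin T (GS a)"
  "\<forall>a b. a \<le> b \<and> b \<le> m \<longrightarrow> GS b \<subseteq> GS a"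
  "\<forall>a<m. GS (ord_succ a) \<lhd> (G\<lparr>carrier := GS a\<rparr>)"
  "\<forall>a\<le>m. is_limit a \<longrightarrow> GS a = (\<Inter>b\<in>{b. b < a}. GS b)"
  "\<forall>a<m. finite (carrier ((G\<lparr>carrier := GS a\<rparr>) Mod GS (ord_succ a))) \<and>
             simple_group ((G\<lparr>carrier := GS a\<rparr>) Mod GS (ord_succ a))"
  using GSc unfolding composition_series_def by argo+
lemma HS_facts:
  "HS (LEAST a. True) = carrier G" "HS d = {\<one>}"
  "\<forall>a\<le>d. subgroup (HS a) G \<and> closedin T (HS a)"
  "\<forall>a b. a \<le> b \<and> b \<le> d \<longrightarrow> HS b \<subseteq> HS a"
  "\<forall>a<d. HS (ord_succ a) \<lhd> (G\<lparr>carrier := HS a\<rparr>)"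
  "\<forall>a\<le>d. is_limit a \<longrightarrow> HS a = (\<Inter>b\<in>{b. b < a}. HS b)"
  "\<forall>a<d. finite (carrier ((G\<lparr>carrier := HS a\<rparr>) Mod HS (ord_succ a))) \<and>
             simple_group ((G\<lparr>carrier := HS a\<rparr>) Mod HS (ord_succ a))"
  using HSc unfolding composition_series_def by argo+

lemma G_sub: "a \<le> m \<Longrightarrow> subgroup (GS a) G" using GS_facts(3) by blast
lemma G_closed: "a \<le> m \<Longrightarrow> closedin T (GS a)" using GS_facts(3) by blast
lemma G_mono: "a \<le> b \<Longrightarrow> b \<le> m \<Longrightarrow> GS b \<subseteq> GS a" using GS_facts(4) by blast
lemma G_norm: "a < m \<Longrightarrow> GS (ord_succ a) \<lhd> G\<lparr>carrier := GS a\<rparr>" using GS_facts(5) by blast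
lemma G_simple: "a < m \<Longrightarrow> simple_group (G\<lparr>carrier := GS a\<rparr> Mod GS (ord_succ a))" using GS_facts(7) by blast
lemma G_bot: "GS (LEAST a. True) = carrier G" using GS_facts(1) .
lemma G_top: "GS m = {\<one>}" using GS_facts(2) .
lemma G_lim: "a \<le> m \<Longrightarrow> is_limit a \<Longrightarrow> GS a = (\<Inter>b\<in>{b. b < a}. GS b)" using GS_facts(6) by blast

lemma H_sub: "a \<le> d \<Longrightarrow> subgroup (HS a) G" using HS_facts(3) by blast
lemma H_closed: "a \<le> d \<Longrightarrow> closedin T (HS a)" using HS_facts(3) by blast
lemma H_mono: "a \<le> b \<Longrightarrow> b \<le> d \<Longrightarrow> HS b \<subseteq> HS a" using HS_facts(4) by blast
lemma H_norm: "a < d \<Longrightarrow> HS (ord_succ a) \<lhd> G\<lparr>carrier := HS a\<rparr>" using HS_facts(5) by blast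
lemma H_bot: "HS (LEAST a. True) = carrier G" using HS_facts(1) .
lemma H_top: "HS d = {\<one>}" using HS_facts(2) .
lemma H_lim: "a \<le> d \<Longrightarrow> is_limit a \<Longrightarrow> HS a = (\<Inter>b\<in>{b. b < a}. HS b)" using HS_facts(6) by blast

definition v :: "'i \<Rightarrow> 'j \<Rightarrow> 'a set" where
  "v a b = GS (ord_succ a) <#> (GS a \<inter> HS b)"

lemma succ_le_m: "a < m \<Longrightarrow> ord_succ a \<le> m" by (rule succ_le)

lemma Gs_sub: "a < m \<Longrightarrow> subgroup (GS (ord_succ a)) G"
  using G_sub succ_le_m by blast

lemma Gs_le: "a < m \<Longrightarrow> GS (ord_succ a) \<subseteq> GS a"
  using G_mono succ_le_m succ_gt less_imp_le by blast

lemma v_bounds: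
  assumes a: "a < m" and b: "b \<le> d"
  shows "GS (ord_succ a) \<subseteq> v a b" "v a b \<subseteq> GS a"
proof -
  have sa: "subgroup (GS a) G" using G_sub a by simp
  have sb: "subgroup (HS b) G" using H_sub b by simp
  have ss: "subgroup (GS (ord_succ a)) G" using Gs_sub a by simp
  show "GS (ord_succ a) \<subseteq> v a b"
  proof
    fix h assume h: "h \<in> GS (ord_succ a)"
    have "\<one> \<in> GS a \<inter> HS b" using sa sb subgroup.one_closed by blast
    moreover have "h = h \<otimes> \<one>" using h ss subgroup.mem_carrier by fastforce
    ultimately show "h \<in> v a b" unfolding v_def set_mult_def using h by blast
  qed
  show "v a b \<subseteq> GS a"
  proof
    fix x assume "x \<in> v a b"
    then obtain h k where hk: "h \<in> GS (ord_succ a)" "k \<in> GS a" "x = h \<otimes> k"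
      unfolding v_def set_mult_def by blast
    have "h \<in> GS a" using hk(1) Gs_le[OF a] by blast
    thus "x \<in> GS a" using hk subgroup.m_closed[OF sa] by blast
  qed
qed

lemma v_mono:
  assumes "b \<le> b'" "b' \<le> d"
  shows "v a b' \<subseteq> v a b"
  using H_mono[OF assms] unfolding v_def set_mult_def by blast

lemma v_bot: "a < m \<Longrightarrow> v a (LEAST b. True) = GS a"
proof -
  assume a: "a < m"
  have "GS a \<subseteq> v a (LEAST b. True)"
  proof
    fix x assume x: "x \<in> GS a"
    have "\<one> \<in> GS (ord_succ a)" using Gs_sub[OF a] subgroup.one_closed by blast
    moreover have "x = \<one> \<otimes> x" using x G_sub a subgroup.mem_carrier by (metis l_one less_imp_le)
    moreover have "x \<in> GS a \<inter> HS (LEAST b. True)" using x H_bot G_sub a subgroup.mem_carrier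
      by (metis IntI less_imp_le)
    ultimately show "x \<in> v a (LEAST b. True)" unfolding v_def set_mult_def by blast
  qed
  thus ?thesis using v_bounds(2)[OF a least_le] by blast
qed

lemma v_top: "a < m \<Longrightarrow> v a d = GS (ord_succ a)"
proof -
  assume a: "a < m"
  have "v a d \<subseteq> GS (ord_succ a)"
  proof
    fix x assume "x \<in> v a d"
    then obtain h where hk: "h \<in> GS (ord_succ a)" "x = h \<otimes> \<one>"
      unfolding v_def set_mult_def H_top by blast
    thus "x \<in> GS (ord_succ a)" using subgroup.mem_carrier[OF Gs_sub[OF a]] by simp
  qed
  thus ?thesis using v_bounds(1)[OF a order_refl] by blast
qed

lemma G_ne: "a < m \<Longrightarrow> GS (ord_succ a) \<noteq> GS a"
proof
  assume a: "a < m" and eq: "GS (ord_succ a) = GS a"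
  interpret G': group "G\<lparr>carrier := GS a\<rparr>" using subgroup_imp_group G_sub a less_imp_le by blast
  have "\<not> simple_group (G\<lparr>carrier := GS a\<rparr> Mod carrier (G\<lparr>carrier := GS a\<rparr>))"
    by (rule G'.self_factor_not_simple)
  thus False using G_simple[OF a] eq by simp
qed

lemma v_step_normal:
  assumes a: "a < m" and b: "b < d"
  shows "v a (ord_succ b) \<lhd> G\<lparr>carrier := v a b\<rparr>"
  unfolding v_def
  using preliminary2[OF G_sub[OF less_imp_le[OF a]] G_norm[OF a] H_sub[OF less_imp_le[OF b]] H_norm[OF b]] .

lemma v_two:
  assumes a: "a < m" and b: "b < d" and vb: "v a b = GS a" and ne: "v a (ord_succ b) \<noteq> GS a"
  shows "v a (ord_succ b) = GS (ord_succ a)"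
proof -
  have "v a (ord_succ b) = GS a \<or> v a (ord_succ b) = GS (ord_succ a)"
    using simple_between[OF G_sub[OF less_imp_le[OF a]] G_norm[OF a] G_simple[OF a]]
      v_step_normal[OF a b] vb v_bounds(1)[OF a succ_le[OF b]] by simp
  thus ?thesis using ne by blast
qed

lemma v_lim:
  assumes a: "a < m" and l: "l \<le> d" and lim: "is_limit l" and all: "\<forall>b<l. v a b = GS a"
  shows "v a l = GS a"
proof
  show "v a l \<subseteq> GS a" using v_bounds(2)[OF a l] .
  show "GS a \<subseteq> v a l"
  proof
    fix x assume x: "x \<in> GS a"
    have sa: "subgroup (GS a) G" using G_sub a by simp
    have xG: "x \<in> carrier G" using subgroup.mem_carrier[OF sa x] .
    define H where "H = GS (ord_succ a)"
    have sH: "subgroup H G" unfolding H_def using Gs_sub[OF a] .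
    have HGa: "H \<subseteq> GS a" unfolding H_def using Gs_le[OF a] .
    define C where "C = {z \<in> topspace T. x \<otimes> inv z \<in> H}"
    have cont: "continuous_map T T (\<lambda>z. x \<otimes> inv z)"
    proof -
      have "continuous_map T (prod_topology T T) (\<lambda>z. (x, inv z))"
        using icont xG top by (intro continuous_map_pairedI) auto
      hence "continuous_map T T ((\<lambda>(x, y). x \<otimes> y) \<circ> (\<lambda>z. (x, inv z)))"
        using mcont continuous_map_compose by blast
      thus ?thesis by (simp add: o_def)
    qed
    have Cc: "closedin T C"
      unfolding C_def using closedin_continuous_map_preimage[OF cont] G_closed[OF succ_le_m[OF a]]
      H_def by blast
    define U where "U = (\<lambda>b. C \<inter> HS b) ` {b. b < l}"
    have Ucl: "\<forall>K\<in>U. closedin T K"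
      unfolding U_def using Cc H_closed l by (auto intro!: closedin_Int)
    have ne: "C \<inter> HS b \<noteq> {}" if b: "b < l" for b
    proof -
      have "v a b = GS a" using all b by blast
      hence "x \<in> v a b" using x by simp
      then obtain h k where hk: "h \<in> H" "k \<in> GS a \<inter> HS b" "x = h \<otimes> k"
        unfolding v_def set_mult_def H_def by blast
      have hG: "h \<in> carrier G" using subgroup.mem_carrier[OF sH hk(1)] .
      have "k \<in> GS a" using hk(2) by blast
      hence kG: "k \<in> carrier G" using subgroup.mem_carrier[OF sa] by blast
      have "x \<otimes> inv k = h" using hk(3) hG kG by (simp add: m_assoc)
      hence "k \<in> C" unfolding C_def using kG top hk(1) by simp
      thus ?thesis using hk(2) by blast
    qed
    have fip: "\<Inter>F \<noteq> {}" if F: "finite F" "F \<subseteq> U" for F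
    proof -
      obtain B where B: "B \<subseteq> {b. b < l}" "finite B" "F = (\<lambda>b. C \<inter> HS b) ` B"
        using F unfolding U_def by (meson finite_subset_image)
      show ?thesis
      proof (cases "B = {}")
        case True thus ?thesis using B by simp
      next
        case False
        define M where "M = Max B"
        have MB: "M \<in> B" unfolding M_def using B False by simp
        have Ml: "M < l" using MB B by blast
        have "C \<inter> HS M \<subseteq> \<Inter>F"
        proof -
          have "\<forall>b\<in>B. HS M \<subseteq> HS b"
            using B l Ml unfolding M_def by (intro ballI H_mono) auto
          thus ?thesis using B by auto
        qed
        thus ?thesis using ne[OF Ml] by blast
      qed
    qed
    have "\<Inter>U \<noteq> {}" using cpt Ucl fip unfolding compact_space_fip by blast
    then obtain z where z: "z \<in> \<Inter>U" by blast
    obtain b0 where b0: "b0 < l" using lim unfolding is_limit_def by blast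
    have zC: "z \<in> C" using z b0 unfolding U_def by blast
    have "z \<in> (\<Inter>b\<in>{b. b < l}. HS b)" using z unfolding U_def by blast
    hence zl: "z \<in> HS l" using H_lim[OF l lim] by simp
    have zG: "z \<in> carrier G" using zC top unfolding C_def by simp
    define h where "h = x \<otimes> inv z"
    have hH: "h \<in> H" using zC unfolding C_def h_def by simp
    have hG: "h \<in> carrier G" using subgroup.mem_carrier[OF sH hH] .
    have zeq: "z = inv h \<otimes> x" unfolding h_def using xG zG by (simp add: inv_mult_group m_assoc)
    have "h \<in> GS a" using hH HGa by blast
    hence ih: "inv h \<in> GS a" using subgroup.m_inv_closed[OF sa] by blast
    have zGa: "z \<in> GS a" using subgroup.m_closed[OF sa ih x] zeq by simp
    have xe: "x = h \<otimes> z" unfolding h_def using xG zG by (simp add: m_assoc)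
    have "h \<otimes> z \<in> H <#> (GS a \<inter> HS l)" unfolding set_mult_def using hH zGa zl by blast
    thus "x \<in> v a l" unfolding v_def H_def[symmetric] using xe by simp
  qed
qed

lemma jump:
  assumes a: "a < m"
  obtains p where "p < d" "\<And>b. b \<le> d \<Longrightarrow> b \<le> p \<Longrightarrow> v a b = GS a"
    "\<And>b. b \<le> d \<Longrightarrow> \<not> b \<le> p \<Longrightarrow> v a b = GS (ord_succ a)"
proof -
  define f where "f = (LEAST b. b \<le> d \<and> v a b \<noteq> GS a)"
  have ex: "d \<le> d \<and> v a d \<noteq> GS a" using v_top[OF a] G_ne[OF a] by simp
  have f1: "f \<le> d \<and> v a f \<noteq> GS a" unfolding f_def using LeastI[of "\<lambda>b. b \<le> d \<and> v a b \<noteq> GS a" d, OF ex] .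
  have below: "v a b = GS a" if "b < f" "b \<le> d" for b
    using not_less_Least[of b "\<lambda>b. b \<le> d \<and> v a b \<noteq> GS a"] that unfolding f_def by blast
  have bot: "(LEAST b. True) < f"
  proof -
    have "(LEAST b. True) \<le> f" by (rule least_le)
    moreover have "(LEAST b. True) \<noteq> f" using v_bot[OF a] f1 by auto
    ultimately show ?thesis by simp
  qed
  have nl: "\<not> is_limit f"
  proof
    assume lim: "is_limit f"
    have "\<forall>b<f. v a b = GS a" using below f1 by auto
    hence "v a f = GS a" using v_lim[OF a _ lim] f1 by blast
    thus False using f1 by blast
  qed
  obtain p where p: "p < f" "f = ord_succ p" using nonlimit_succ[OF nl bot] by blast
  have pd: "p < d" using p f1 by (meson less_le_trans)
  have vp: "v a p = GS a" using below p pd by simp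
  have vsp: "v a (ord_succ p) = GS (ord_succ a)"
    using v_two[OF a pd vp] f1 p by simp
  show ?thesis
  proof (rule that[OF pd])
    fix b assume b: "b \<le> d" "b \<le> p"
    thus "v a b = GS a" using below p by simp
  next
    fix b assume b: "b \<le> d" "\<not> b \<le> p"
    hence "ord_succ p \<le> b" using succ_le by (meson not_le)
    hence "v a b \<subseteq> GS (ord_succ a)" using v_mono[OF _ b(1)] vsp by blast
    thus "v a b = GS (ord_succ a)" using v_bounds(1)[OF a b(1)] by blast
  qed
qed

lemma jump_char:
  assumes a: "a < m"
  obtains p where "p < d" "\<And>q. q < d \<Longrightarrow> (v a q \<noteq> v a (ord_succ q)) \<longleftrightarrow> q = p"
    "v a p = GS a" "v a (ord_succ p) = GS (ord_succ a)"
proof -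
  obtain p where p: "p < d" "\<And>b. b \<le> d \<Longrightarrow> b \<le> p \<Longrightarrow> v a b = GS a"
    "\<And>b. b \<le> d \<Longrightarrow> \<not> b \<le> p \<Longrightarrow> v a b = GS (ord_succ a)"
    using jump[OF a] by blast
  have ne: "GS (ord_succ a) \<noteq> GS a" using G_ne[OF a] .
  have vp: "v a p = GS a" using p by simp
  have sp: "\<not> ord_succ p \<le> p" using succ_gt[OF p(1)] by simp
  have vsp: "v a (ord_succ p) = GS (ord_succ a)" using p(3)[OF succ_le[OF p(1)] sp] .
  show ?thesis
  proof (rule that[OF p(1) _ vp vsp])
    fix q assume q: "q < d"
    have sq: "ord_succ q \<le> d" using succ_le[OF q] .
    show "(v a q \<noteq> v a (ord_succ q)) \<longleftrightarrow> q = p"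
    proof (cases "q = p")
      case True thus ?thesis using vp vsp ne by simp
    next
      case False
      show ?thesis
      proof (cases "q < p")
        case True
        hence "ord_succ q \<le> p" using succ_le by blast
        thus ?thesis using p(2)[OF sq] p(2)[of q] q True False by simp
      next
        case c: False
        hence "\<not> q \<le> p" using False by simp
        moreover have "\<not> ord_succ q \<le> p" using calculation succ_gt[OF q] by simp
        ultimately show ?thesis using p(3)[OF sq] p(3)[of q] q False by simp
      qed
    qed
  qed
qed

lemma v_sub: "a < m \<Longrightarrow> b \<le> d \<Longrightarrow> subgroup (v a b) G"
  unfolding v_def using setmult_sub[OF G_sub G_norm H_sub] by simp

lemma zass_iso:
  assumes a: "a < m" and p: "p < d"
  shows "(G\<lparr>carrier := v a p\<rparr> Mod v a (ord_succ p)) \<cong>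
         (G\<lparr>carrier := HS (ord_succ p) <#> (HS p \<inter> GS a)\<rparr> Mod (HS (ord_succ p) <#> (HS p \<inter> GS (ord_succ a))))"
  using Zassenhaus[OF G_sub[OF less_imp_le[OF a]] G_norm[OF a] H_sub[OF less_imp_le[OF p]] H_norm[OF p]]
  unfolding v_def by (simp add: inf_commute)

lemma zass_transfer:
  assumes a: "a < m" and p: "p < d" and ne: "v a p \<noteq> v a (ord_succ p)"
  shows "HS (ord_succ p) <#> (HS p \<inter> GS a) \<noteq> HS (ord_succ p) <#> (HS p \<inter> GS (ord_succ a))"
proof
  assume eq: "HS (ord_succ p) <#> (HS p \<inter> GS a) = HS (ord_succ p) <#> (HS p \<inter> GS (ord_succ a))"
  have N2: "subgroup (HS (ord_succ p) <#> (HS p \<inter> GS (ord_succ a))) G"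
    using setmult_sub[OF H_sub[OF less_imp_le[OF p]] H_norm[OF p] Gs_sub[OF a]] .
  have "v a p = v a (ord_succ p)"
    using iso_triv_transfer[OF zass_iso[OF a p] v_sub[OF a less_imp_le[OF p]]
        v_sub[OF a succ_le[OF p]] v_mono[OF less_imp_le[OF succ_gt[OF p]] succ_le[OF p]] N2 eq] .
  thus False using ne by simp
qed

end


lemma correspondence:
  fixes G :: "('a, 'b) monoid_scheme" and T :: "'a topology"
    and mu :: "'i::wellorder" and Gs :: "'i \<Rightarrow> 'a set"
    and Delta :: "'j::wellorder" and Hs :: "'j \<Rightarrow> 'a set"
  assumes A: "two_series G T mu Gs Delta Hs" and B: "two_series G T Delta Hs mu Gs"
  shows "\<exists>\<phi>. bij_betw \<phi> {a. a < mu} {p. p < Delta} \<and>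
     (\<forall>a<mu. (G\<lparr>carrier:=Gs a\<rparr> Mod Gs (ord_succ a)) \<cong> (G\<lparr>carrier:=Hs (\<phi> a)\<rparr> Mod Hs (ord_succ (\<phi> a))))"
proof -
  interpret A: two_series G T mu Gs Delta Hs by (rule A)
  interpret B: two_series G T Delta Hs mu Gs by (rule B)
  have key: "A.v a p \<noteq> A.v a (ord_succ p) \<longleftrightarrow> B.v p a \<noteq> B.v p (ord_succ a)"
    if H: "a < mu" "p < Delta" for a p
  proof -
    have 1: "A.v a p \<noteq> A.v a (ord_succ p) \<Longrightarrow> B.v p a \<noteq> B.v p (ord_succ a)"
      unfolding B.v_def by (rule A.zass_transfer[OF H])
    have 2: "B.v p a \<noteq> B.v p (ord_succ a) \<Longrightarrow> A.v a p \<noteq> A.v a (ord_succ p)"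
      unfolding A.v_def by (rule B.zass_transfer[OF H(2,1)])
    show ?thesis using 1 2 by blast
  qed
  define \<phi> where "\<phi> a = (THE p. p < Delta \<and> A.v a p \<noteq> A.v a (ord_succ p))" for a
  have phi: "\<phi> a < Delta \<and> A.v a (\<phi> a) \<noteq> A.v a (ord_succ (\<phi> a))
     \<and> A.v a (\<phi> a) = Gs a \<and> A.v a (ord_succ (\<phi> a)) = Gs (ord_succ a)" if a: "a < mu" for a
  proof -
    obtain p where p: "p < Delta" "\<And>q. q < Delta \<Longrightarrow> (A.v a q \<noteq> A.v a (ord_succ q)) \<longleftrightarrow> q = p"
      "A.v a p = Gs a" "A.v a (ord_succ p) = Gs (ord_succ a)" by (rule A.jump_char[OF a]) blast
    have P: "p < Delta \<and> A.v a p \<noteq> A.v a (ord_succ p)" using p(1) p(2)[OF p(1)] by simp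
    have Q: "q = p" if "q < Delta \<and> A.v a q \<noteq> A.v a (ord_succ q)" for q
      using p(2)[of q] that by simp
    have "\<phi> a = p" unfolding \<phi>_def using P Q by (rule the_equality)
    thus ?thesis using P p(3,4) by simp
  qed
  have uniqB: "a = a'" if H: "p < Delta" "a < mu" "a' < mu" "B.v p a \<noteq> B.v p (ord_succ a)"
    "B.v p a' \<noteq> B.v p (ord_succ a')" for p a a'
  proof -
    obtain c where c: "c < mu" "\<And>q. q < mu \<Longrightarrow> (B.v p q \<noteq> B.v p (ord_succ q)) \<longleftrightarrow> q = c"
      "B.v p c = Hs p" "B.v p (ord_succ c) = Hs (ord_succ p)"
      by (rule B.jump_char[OF H(1)]) blast
    have "a = c" using c(2)[OF H(2)] H(4) by simp
    moreover have "a' = c" using c(2)[OF H(3)] H(5) by simp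
    ultimately show ?thesis by simp
  qed
  have inj: "inj_on \<phi> {a. a < mu}"
  proof (rule inj_onI)
    fix a a' assume a: "a \<in> {a. a < mu}" and a': "a' \<in> {a. a < mu}" and eq: "\<phi> a = \<phi> a'"
    have pa: "\<phi> a < Delta" "A.v a (\<phi> a) \<noteq> A.v a (ord_succ (\<phi> a))" using phi[of a] a by auto
    have pa': "\<phi> a' < Delta" "A.v a' (\<phi> a') \<noteq> A.v a' (ord_succ (\<phi> a'))" using phi[of a'] a' by auto
    have 1: "B.v (\<phi> a) a \<noteq> B.v (\<phi> a) (ord_succ a)" using key[of a "\<phi> a"] pa a by simp
    have "B.v (\<phi> a') a' \<noteq> B.v (\<phi> a') (ord_succ a')" using key[of a' "\<phi> a'"] pa' a' by simp
    hence 2: "B.v (\<phi> a) a' \<noteq> B.v (\<phi> a) (ord_succ a')" using eq by simp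
    show "a = a'" using uniqB[OF pa(1) _ _ 1 2] a a' by simp
  qed
  have surj: "\<phi> ` {a. a < mu} = {p. p < Delta}"
  proof
    show "\<phi> ` {a. a < mu} \<subseteq> {p. p < Delta}" using phi by blast
    show "{p. p < Delta} \<subseteq> \<phi> ` {a. a < mu}"
    proof
      fix p assume p0: "p \<in> {p. p < Delta}"
      hence p: "p < Delta" by simp
      obtain c where c: "c < mu" "\<And>q. q < mu \<Longrightarrow> (B.v p q \<noteq> B.v p (ord_succ q)) \<longleftrightarrow> q = c"
        "B.v p c = Hs p" "B.v p (ord_succ c) = Hs (ord_succ p)"
        by (rule B.jump_char[OF p]) blast
      have "B.v p c \<noteq> B.v p (ord_succ c)" using c(2)[OF c(1)] by simp
      hence ne: "A.v c p \<noteq> A.v c (ord_succ p)" using key[OF c(1) p] by simp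
      have pc: "\<phi> c < Delta" "A.v c (\<phi> c) \<noteq> A.v c (ord_succ (\<phi> c))" using phi[OF c(1)] by auto
      obtain p' where p': "p' < Delta" "\<And>q. q < Delta \<Longrightarrow> (A.v c q \<noteq> A.v c (ord_succ q)) \<longleftrightarrow> q = p'"
        "A.v c p' = Gs c" "A.v c (ord_succ p') = Gs (ord_succ c)"
        by (rule A.jump_char[OF c(1)]) blast
      have "p = p'" using p'(2)[OF p] ne by simp
      moreover have "\<phi> c = p'" using p'(2)[OF pc(1)] pc(2) by simp
      ultimately have "p = \<phi> c" by simp
      thus "p \<in> \<phi> ` {a. a < mu}" using c(1) by blast
    qed
  qed
  have iso: "(G\<lparr>carrier:=Gs a\<rparr> Mod Gs (ord_succ a)) \<cong> (G\<lparr>carrier:=Hs (\<phi> a)\<rparr> Mod Hs (ord_succ (\<phi> a)))"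
    if a: "a < mu" for a
  proof -
    define p where "p = \<phi> a"
    have pD: "p < Delta" and ne: "A.v a p \<noteq> A.v a (ord_succ p)"
      and v1: "A.v a p = Gs a" and v2: "A.v a (ord_succ p) = Gs (ord_succ a)"
      using phi[OF a] unfolding p_def by auto
    have neB: "B.v p a \<noteq> B.v p (ord_succ a)" using key[OF a pD] ne by simp
    obtain c where c: "c < mu" "\<And>q. q < mu \<Longrightarrow> (B.v p q \<noteq> B.v p (ord_succ q)) \<longleftrightarrow> q = c"
      "B.v p c = Hs p" "B.v p (ord_succ c) = Hs (ord_succ p)"
      by (rule B.jump_char[OF pD]) blast
    have "a = c" using c(2)[OF a] neB by simp
    hence w1: "B.v p a = Hs p" and w2: "B.v p (ord_succ a) = Hs (ord_succ p)" using c(3,4) by simp_all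
    have "(G\<lparr>carrier := A.v a p\<rparr> Mod A.v a (ord_succ p)) \<cong> (G\<lparr>carrier := B.v p a\<rparr> Mod B.v p (ord_succ a))"
      using A.zass_iso[OF a pD] unfolding B.v_def .
    thus ?thesis using v1 v2 w1 w2 unfolding p_def by simp
  qed
  show ?thesis using inj surj iso unfolding bij_betw_def by blast
qed

theorem theorem1p6:
  fixes G :: "('a, 'b) monoid_scheme" and T :: "'a topology"
    and mu :: "'i::wellorder" and Gs :: "'i \<Rightarrow> 'a set"
    and Delta :: "'j::wellorder" and Hs :: "'j \<Rightarrow> 'a set"
    and S :: "('s, 'c) monoid_scheme"
  assumes "profinite_group G T"
    and "composition_series G T mu Gs"
    and "composition_series G T Delta Hs"
    and "finite (carrier S)" and "simple_group S"
  shows "{a. a < mu \<and> ((G\<lparr>carrier := Gs a\<rparr>) Mod Gs (ord_succ a)) \<cong> S}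
         \<approx> {l. l < Delta \<and> ((G\<lparr>carrier := Hs l\<rparr>) Mod Hs (ord_succ l)) \<cong> S}"
proof -
  have P: "group G" "topspace T = carrier G"
     "continuous_map (prod_topology T T) T (\<lambda>(x, y). x \<otimes>\<^bsub>G\<^esub> y)"
     "continuous_map T T (\<lambda>x. inv\<^bsub>G\<^esub> x)" "compact_space T"
    using assms(1) unfolding profinite_group_def by simp_all
  have A: "two_series G T mu Gs Delta Hs"
    unfolding two_series_def two_series_axioms_def using P assms(2,3) by simp
  have B: "two_series G T Delta Hs mu Gs"
    unfolding two_series_def two_series_axioms_def using P assms(2,3) by simp
  obtain \<phi> where bij: "bij_betw \<phi> {a. a < mu} {p. p < Delta}"
    and iso: "\<And>a. a < mu \<Longrightarrow> (G\<lparr>carrier:=Gs a\<rparr> Mod Gs (ord_succ a)) \<cong> (G\<lparr>carrier:=Hs (\<phi> a)\<rparr> Mod Hs (ord_succ (\<phi> a)))"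
    using correspondence[OF A B] by blast
  interpret A: two_series G T mu Gs Delta Hs by (rule A)
  have grpA: "group (G\<lparr>carrier:=Gs a\<rparr> Mod Gs (ord_succ a))" if "a < mu" for a
    using normal.factorgroup_is_group[OF A.G_norm[OF that]] .
  have "bij_betw \<phi> {a. a < mu \<and> ((G\<lparr>carrier := Gs a\<rparr>) Mod Gs (ord_succ a)) \<cong> S}
         {l. l < Delta \<and> ((G\<lparr>carrier := Hs l\<rparr>) Mod Hs (ord_succ l)) \<cong> S}"
  proof -
    have inj: "inj_on \<phi> {a. a < mu \<and> ((G\<lparr>carrier := Gs a\<rparr>) Mod Gs (ord_succ a)) \<cong> S}"
      using bij unfolding bij_betw_def by (rule inj_on_subset[OF conjunct1]) blast
    have sub: "\<phi> ` {a. a < mu \<and> ((G\<lparr>carrier := Gs a\<rparr>) Mod Gs (ord_succ a)) \<cong> S}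
        \<subseteq> {l. l < Delta \<and> ((G\<lparr>carrier := Hs l\<rparr>) Mod Hs (ord_succ l)) \<cong> S}"
    proof
      fix p assume "p \<in> \<phi> ` {a. a < mu \<and> ((G\<lparr>carrier := Gs a\<rparr>) Mod Gs (ord_succ a)) \<cong> S}"
      then obtain a where a: "a < mu" "(G\<lparr>carrier := Gs a\<rparr> Mod Gs (ord_succ a)) \<cong> S" "p = \<phi> a" by blast
      have "p < Delta" using bij a unfolding bij_betw_def by blast
      moreover have "(G\<lparr>carrier := Hs p\<rparr> Mod Hs (ord_succ p)) \<cong> S"
        using iso_trans[OF group.iso_sym[OF grpA[OF a(1)] iso[OF a(1)]] a(2)] a(3) by simp
      ultimately show "p \<in> {l. l < Delta \<and> ((G\<lparr>carrier := Hs l\<rparr>) Mod Hs (ord_succ l)) \<cong> S}" by blast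
    qed
    have sup: "{l. l < Delta \<and> ((G\<lparr>carrier := Hs l\<rparr>) Mod Hs (ord_succ l)) \<cong> S}
        \<subseteq> \<phi> ` {a. a < mu \<and> ((G\<lparr>carrier := Gs a\<rparr>) Mod Gs (ord_succ a)) \<cong> S}"
    proof
      fix p assume p: "p \<in> {l. l < Delta \<and> ((G\<lparr>carrier := Hs l\<rparr>) Mod Hs (ord_succ l)) \<cong> S}"
      then obtain a where a: "a < mu" "p = \<phi> a" using bij unfolding bij_betw_def by blast
      have "(G\<lparr>carrier := Gs a\<rparr> Mod Gs (ord_succ a)) \<cong> S"
        using iso_trans[OF iso[OF a(1)]] p a(2) by blast
      thus "p \<in> \<phi> ` {a. a < mu \<and> ((G\<lparr>carrier := Gs a\<rparr>) Mod Gs (ord_succ a)) \<cong> S}" using a by blast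
    qed
    show ?thesis unfolding bij_betw_def using inj sub sup by blast
  qed
  thus ?thesis unfolding eqpoll_def by blast
qed

end
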